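(* Fix $(\mathbf{x},t)$, a unit vector $\mathbf{n}\in\mathbb{R}^N$, a real number $V_{\mathbf{n}}$, constants $\nu>0$, $\lambda>0$, $\mathrm{k}>0$, and $\chi\in\{0,1\}$. Let $\widetilde\rho_0>0$, $\widetilde{\mathbf{u}}_0\in\mathbb{R}^N$, $\widetilde\phi_0$, $\widetilde\mu_0$, $\widetilde\theta_0$ be smooth functions of $\xi\in\mathbb{R}$ satisfying \[ \begin{aligned} &-\partial_\xi\widetilde\rho_0\,V_{\mathbf{n}}+\partial_\xi(\widetilde\rho_0\widetilde{\mathbf{u}}_0)\cdot\mathbf{n}=0,\\ &\partial_\xi\big((\nu+\lambda)\partial_\xi\widetilde{\mathbf{u}}_0\cdot\mathbf{n}\big)\mathbf{n}+\partial_\xi(\nu\partial_\xi\widetilde{\mathbf{u}}_0)+\tfrac14\partial_\xi(\widetilde\phi_0^2-1)^2\,\mathbf{n}-\tfrac12\partial_\xi|\partial_\xi\widetilde\phi_0|^2\,\mathbf{n}=0,\\ &\chi\,\widetilde\rho_0\,\partial_\xi\widetilde\phi_0\,(V_{\mathbf{n}}-\widetilde{\mathbf{u}}_0\cdot\mathbf{n})=\widetilde\mu_0,\\ &\widetilde\rho_0\widetilde\mu_0=-\partial_{\xi\xi}\widetilde\phi_0+\widetilde\phi_0^3-\widetilde\phi_0,\\ &\mathrm{k}\,\partial_{\xi\xi}\widetilde\theta_0+\nu|\partial_\xi\widetilde{\mathbf{u}}_0|^2+(\nu+\lambda)|\partial_\xi\widetilde{\mathbf{u}}_0\cdot\mathbf{n}|^2+\chi\,\widetilde\mu_0^2=0,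 \end{aligned} \] with $\widetilde\rho_0(\pm\infty)=\rho_0^\pm>0$, $\widetilde{\mathbf{u}}_0(\pm\infty)=\mathbf{u}_0^\pm$, $\widetilde\phi_0(\pm\infty)=\pm1$, and $\widetilde\phi_0(0)=0$. Then \[ \widetilde\rho_0(\xi)\big(V_{\mathbf{n}}-\widetilde{\mathbf{u}}_0(\xi)\cdot\mathbf{n}\big)=\rho_0^\pm\big(V_{\mathbf{n}}-\mathbf{u}_0^\pm\cdot\mathbf{n}\big)\ \text{for all }\xi,\qquad \widetilde\phi_0(\xi)=\tanh\Big(\frac{\xi}{\sqrt2}\Big),\qquad \partial_\xi\widetilde{\mathbf{u}}_0\equiv0,\quad \partial_\xi\widetilde\theta_0\equiv0, \] and moreover $V_{\mathbf{n}}-\widetilde{\mathbf{u}}_0\cdot\mathbf{n}\equiv0$ if $\chi=1$, while $\partial_\xi\widetilde\rho_0\,(V_{\mathbf{n}}-\widetilde{\mathbf{u}}_0\cdot\mathbf{n})\equiv0$ if $\chi=0$.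
   Context: This is the zeroth-order inner problem of a matched asymptotic expansion near the interface $\{\phi=0\}$ of a compressible Navier–Stokes/Allen–Cahn system, written in the stretched normal variable $\xi=d/\epsilon$ ($d$ the signed distance to the interface). The case $\chi=1$ corresponds to mobility $M_\epsilon=1$ and $\chi=0$ to $M_\epsilon=1/\epsilon$. As part of the matching with the outer expansion, the $\xi$-derivatives of $\widetilde\rho_0,\widetilde{\mathbf{u}}_0,\widetilde\phi_0,\widetilde\theta_0$ tend to $0$ as $\xi\to\pm\infty$. *)

theory Defs
  imports "HOL-Analysis.Analysis"
begin

definition smooth_real :: "(real \<Rightarrow> 'a::real_normed_vector) \<Rightarrow> bool" where
  "smooth_real f \<longleftrightarrow>
     (\<exists>D :: nat \<Rightarrow> real \<Rightarrow> 'a. D 0 = f \<and> (\<forall>k x. (D k has_vector_derivative D (Suc k) x) (at x)))"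

end

theory Submission
  imports Defs
begin
lemma lin_zero:
  fixes f a :: "real \<Rightarrow> real"
  assumes d: "\<And>x. (f has_real_derivative (a x * f x)) (at x)" and c: "continuous_on UNIV a" and f0: "f 0 = 0"
  shows "f x = 0"
proof -
  define R where "R = \<bar>x\<bar> + 1"
  have "continuous_on {-R..R} a" using c continuous_on_subset by blast
  then obtain A where A: "\<And>t. t \<in> {-R..R} \<Longrightarrow> (A has_real_derivative a t) (at t within {-R..R})"
    using antiderivative_continuous[of "-R" R a] unfolding has_real_derivative_iff_has_vector_derivative by metis
  have "\<And>t. t \<in> {-R..R} \<Longrightarrow> ((\<lambda>s. f s * exp (- A s)) has_real_derivative 0) (at t within {-R..R})"
  proof -
    fix t assume t: "t \<in> {-R..R}"
    have "((\<lambda>s. f s * exp (- A s)) has_real_derivative (a t * f t) * exp (- A t) + f t * (exp (- A t) * (- a t))) (at t within {-R..R})"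
    proof -
      have h1: "(f has_real_derivative (a t * f t)) (at t within {-R..R})" using d has_field_derivative_at_within by blast
      have h2: "((\<lambda>s. exp (- A s)) has_real_derivative (exp (- A t) * (- a t))) (at t within {-R..R})"
        using DERIV_chain2[OF DERIV_exp DERIV_minus[OF A[OF t]]] by simp
      show ?thesis using DERIV_mult[OF h1 h2] by simp
    qed
    then show "((\<lambda>s. f s * exp (- A s)) has_real_derivative 0) (at t within {-R..R})"
      by (simp add: algebra_simps)
  qed
  moreover have "convex {-R..R}" by (rule convex_real_interval)
  ultimately obtain k where k: "\<forall>t\<in>{-R..R}. f t * exp (- A t) = k"
    using has_field_derivative_zero_constant[of "{-R..R}" "\<lambda>s. f s * exp (- A s)"] by blast
  have "0 \<in> {-R..R}" "x \<in> {-R..R}" unfolding R_def by auto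
  with k f0 have "f x * exp (- A x) = 0" by force
  then show ?thesis by simp
qed

lemma DERIV_sq:
  fixes f :: "real \<Rightarrow> real"
  assumes "(f has_real_derivative D) (at x)"
  shows "((\<lambda>x. f x ^ 2) has_real_derivative 2 * f x * D) (at x)"
  using DERIV_power[OF assms, of 2] by (simp add: algebra_simps)

lemma const_lim:
  fixes f :: "real \<Rightarrow> 'b::t2_space"
  assumes "(f \<longlongrightarrow> b) F" "F \<noteq> bot" "\<And>x. f x = a"
  shows "a = b"
proof -
  have "f = (\<lambda>_. a)" using assms(3) by auto
  with assms(1) have "((\<lambda>_. a) \<longlongrightarrow> b) F" by simp
  with assms(2) show ?thesis using tendsto_const_iff by metis
qed

lemma X:
  fixes n :: "real ^ 'N" and Vn \<nu> lam kk chi :: real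
    and \<rho> \<phi> \<mu> \<theta> :: "real \<Rightarrow> real" and u :: "real \<Rightarrow> real ^ 'N"
    and \<rho>p \<rho>m :: real and up um :: "real ^ 'N"
  assumes n_unit: "norm n = 1"
    and \<nu>_pos: "\<nu> > 0" and lam_pos: "lam > 0" and kk_pos: "kk > 0"
    and chi_cases: "chi = 0 \<or> chi = 1"
    and smooth: "smooth_real \<rho>" "smooth_real u" "smooth_real \<phi>" "smooth_real \<mu>" "smooth_real \<theta>"
    and \<rho>_pos: "\<And>\<xi>. \<rho> \<xi> > 0"
    and eq_mass: "\<And>\<xi>. - deriv \<rho> \<xi> * Vn
        + vector_derivative (\<lambda>s. \<rho> s *\<^sub>R u s) (at \<xi>) \<bullet> n = 0"
    and eq_mu: "\<And>\<xi>. chi * \<rho> \<xi> * deriv \<phi> \<xi> * (Vn - u \<xi> \<bullet> n) = \<mu> \<xi>"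
    and eq_chem: "\<And>\<xi>. \<rho> \<xi> * \<mu> \<xi> = - deriv (deriv \<phi>) \<xi> + \<phi> \<xi> ^ 3 - \<phi> \<xi>"
    and eq_energy: "\<And>\<xi>. kk * deriv (deriv \<theta>) \<xi>
        + \<nu> * (norm (vector_derivative u (at \<xi>))) ^ 2
        + (\<nu> + lam) * \<bar>vector_derivative u (at \<xi>) \<bullet> n\<bar> ^ 2
        + chi * \<mu> \<xi> ^ 2 = 0"
    and lim_\<rho>: "(\<rho> \<longlongrightarrow> \<rho>p) at_top" "(\<rho> \<longlongrightarrow> \<rho>m) at_bot"
    and lim_u: "(u \<longlongrightarrow> up) at_top" "(u \<longlongrightarrow> um) at_bot"
    and lim_\<phi>: "(\<phi> \<longlongrightarrow> 1) at_top"
    and \<phi>_0: "\<phi> 0 = 0"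
    and match_\<phi>: "((deriv \<phi>) \<longlongrightarrow> 0) at_top"
    and match_\<theta>: "((deriv \<theta>) \<longlongrightarrow> 0) at_top" "((deriv \<theta>) \<longlongrightarrow> 0) at_bot"
  shows "(\<forall>\<xi>. \<rho> \<xi> * (Vn - u \<xi> \<bullet> n) = \<rho>p * (Vn - up \<bullet> n)
              \<and> \<rho> \<xi> * (Vn - u \<xi> \<bullet> n) = \<rho>m * (Vn - um \<bullet> n))
       \<and> (\<forall>\<xi>. \<phi> \<xi> = tanh (\<xi> / sqrt 2))
       \<and> (\<forall>\<xi>. vector_derivative u (at \<xi>) = 0)
       \<and> (\<forall>\<xi>. deriv \<theta> \<xi> = 0)
       \<and> (chi = 1 \<longrightarrow> (\<forall>\<xi>. Vn - u \<xi> \<bullet> n = 0))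
       \<and> (chi = 0 \<longrightarrow> (\<forall>\<xi>. deriv \<rho> \<xi> * (Vn - u \<xi> \<bullet> n) = 0))"
proof -
  obtain Dr where Dr: "Dr 0 = \<rho>" "\<forall>k x. (Dr k has_vector_derivative Dr (Suc k) x) (at x)"
    using smooth(1) unfolding smooth_real_def by blast
  obtain Du where Du: "Du 0 = u" "\<forall>k x. (Du k has_vector_derivative Du (Suc k) x) (at x)"
    using smooth(2) unfolding smooth_real_def by blast
  obtain Dp where Dp: "Dp 0 = \<phi>" "\<forall>k x. (Dp k has_vector_derivative Dp (Suc k) x) (at x)"
    using smooth(3) unfolding smooth_real_def by blast
  obtain Dt where Dt: "Dt 0 = \<theta>" "\<forall>k x. (Dt k has_vector_derivative Dt (Suc k) x) (at x)"
    using smooth(5) unfolding smooth_real_def by blast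
  have r1: "\<And>x. (\<rho> has_real_derivative Dr 1 x) (at x)"
    using Dr unfolding has_real_derivative_iff_has_vector_derivative by (metis One_nat_def)
  have u1: "\<And>x. (u has_vector_derivative Du 1 x) (at x)"
    using Du by (metis One_nat_def)
  have u2: "\<And>x. (Du 1 has_vector_derivative Du 2 x) (at x)"
    using Du by (metis One_nat_def Suc_1)
  have p1: "\<And>x. (\<phi> has_real_derivative Dp 1 x) (at x)"
    using Dp unfolding has_real_derivative_iff_has_vector_derivative by (metis One_nat_def)
  have p2: "\<And>x. (Dp 1 has_real_derivative Dp 2 x) (at x)"
    using Dp unfolding has_real_derivative_iff_has_vector_derivative by (metis One_nat_def Suc_1)
  have t1: "\<And>x. (\<theta> has_real_derivative Dt 1 x) (at x)"
    using Dt unfolding has_real_derivative_iff_has_vector_derivative by (metis One_nat_def)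
  have t2: "\<And>x. (Dt 1 has_real_derivative Dt 2 x) (at x)"
    using Dt unfolding has_real_derivative_iff_has_vector_derivative by (metis One_nat_def Suc_1)
  have dr: "deriv \<rho> = Dr 1" using r1 DERIV_imp_deriv by blast
  have du: "\<And>x. vector_derivative u (at x) = Du 1 x" using u1 vector_derivative_at by blast
  have dp: "deriv \<phi> = Dp 1" using p1 DERIV_imp_deriv by blast
  have dpp: "deriv (deriv \<phi>) = Dp 2" unfolding dp using p2 DERIV_imp_deriv by blast
  have dt: "deriv \<theta> = Dt 1" using t1 DERIV_imp_deriv by blast
  have dtt: "deriv (deriv \<theta>) = Dt 2" unfolding dt using t2 DERIV_imp_deriv by blast
  have dru: "\<And>x. vector_derivative (\<lambda>s. \<rho> s *\<^sub>R u s) (at x) = Dr 1 x *\<^sub>R u x + \<rho> x *\<^sub>R Du 1 x"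
  proof -
    fix x
    have "((\<lambda>s. \<rho> s *\<^sub>R u s) has_vector_derivative \<rho> x *\<^sub>R Du 1 x + Dr 1 x *\<^sub>R u x) (at x)"
      using has_vector_derivative_scaleR[OF r1 u1] by simp
    then show "vector_derivative (\<lambda>s. \<rho> s *\<^sub>R u s) (at x) = Dr 1 x *\<^sub>R u x + \<rho> x *\<^sub>R Du 1 x"
      using vector_derivative_at by (metis add.commute)
  qed
  have chi_nn: "chi \<ge> 0" using chi_cases by auto
  have tneg: "\<And>x. Dt 2 x \<le> 0"
  proof -
    fix x
    have "kk * Dt 2 x = - (\<nu> * (norm (Du 1 x)) ^ 2 + (\<nu> + lam) * \<bar>Du 1 x \<bullet> n\<bar> ^ 2 + chi * \<mu> x ^ 2)"
      using eq_energy[of x] unfolding dtt du by linarith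
    moreover have "\<nu> * (norm (Du 1 x)) ^ 2 + (\<nu> + lam) * \<bar>Du 1 x \<bullet> n\<bar> ^ 2 + chi * \<mu> x ^ 2 \<ge> 0"
      using \<nu>_pos lam_pos chi_nn by (intro add_nonneg_nonneg mult_nonneg_nonneg) auto
    ultimately have "kk * Dt 2 x \<le> 0" by linarith
    then show "Dt 2 x \<le> 0" using kk_pos by (simp add: mult_le_0_iff)
  qed
  have tmono: "\<And>x y. x \<le> y \<Longrightarrow> Dt 1 y \<le> Dt 1 x"
    using DERIV_nonpos_imp_nonincreasing t2 tneg by blast
  have t1z: "\<And>x. Dt 1 x = 0"
  proof -
    fix x
    have ev1: "eventually (\<lambda>y. Dt 1 y \<le> Dt 1 x) at_top"
      unfolding eventually_at_top_linorder using tmono by blast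
    have ev2: "eventually (\<lambda>y. Dt 1 y \<ge> Dt 1 x) at_bot"
      unfolding eventually_at_bot_linorder using tmono by blast
    have a: "0 \<le> Dt 1 x"
      using tendsto_upperbound[OF match_\<theta>(1)[unfolded dt] ev1] by simp
    have b: "Dt 1 x \<le> 0"
      using tendsto_lowerbound[OF match_\<theta>(2)[unfolded dt] ev2] by simp
    from a b show "Dt 1 x = 0" by simp
  qed
  have t2z: "\<And>x. Dt 2 x = 0"
  proof -
    fix x
    have "(Dt 1 has_real_derivative 0) (at x)" unfolding t1z[abs_def] by simp
    then show "Dt 2 x = 0" using t2 DERIV_unique by blast
  qed
  have w0: "\<And>x. Du 1 x = 0" and cm0: "\<And>x. chi * \<mu> x ^ 2 = 0"
  proof -
    fix x
    have s: "\<nu> * (norm (Du 1 x)) ^ 2 + (\<nu> + lam) * \<bar>Du 1 x \<bullet> n\<bar> ^ 2 + chi * \<mu> x ^ 2 = 0"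
      using eq_energy[of x] unfolding dtt du t2z by simp
    have n1: "\<nu> * (norm (Du 1 x)) ^ 2 \<ge> 0" using \<nu>_pos by simp
    have n2: "(\<nu> + lam) * \<bar>Du 1 x \<bullet> n\<bar> ^ 2 \<ge> 0" using \<nu>_pos lam_pos by simp
    have n3: "chi * \<mu> x ^ 2 \<ge> 0" using chi_nn by simp
    have "\<nu> * (norm (Du 1 x)) ^ 2 = 0" using s n1 n2 n3 by linarith
    then show "Du 1 x = 0" using \<nu>_pos by simp
    show "chi * \<mu> x ^ 2 = 0" using s n1 n2 n3 by linarith
  qed
  have mu0: "\<And>x. \<mu> x = 0"
  proof -
    fix x
    show "\<mu> x = 0"
    proof (cases "chi = 0")
      case True then show ?thesis using eq_mu[of x] by simp
    next
      case False then have "chi = 1" using chi_cases by simp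
      then show ?thesis using cm0[of x] by simp
    qed
  qed
  have ode2: "\<And>x. Dp 2 x = \<phi> x ^ 3 - \<phi> x"
    using eq_chem unfolding mu0 dpp by (simp add: algebra_simps)

  have s2: "sqrt 2 * sqrt 2 = (2::real)" "sqrt 2 \<noteq> (0::real)" by auto
  define G where "G s = (1/4)*(\<phi> s^2-1)^2 - (1/2)*(Dp 1 s)^2" for s
  have Gd: "\<And>x. (G has_real_derivative 0) (at x)"
  proof -
    fix x
    have "(G has_real_derivative ((1/4)*(2*(\<phi> x^2-1)*(2*\<phi> x*Dp 1 x - 0)) - (1/2)*(2*Dp 1 x*Dp 2 x))) (at x)"
      unfolding G_def[abs_def]
      by (intro DERIV_diff DERIV_cmult DERIV_sq p1 p2 DERIV_const)
    then show "(G has_real_derivative 0) (at x)" unfolding ode2 by (simp add: algebra_simps power2_eq_square power3_eq_cube)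
  qed
  have Gc: "\<And>x. G x = G 0" using Gd DERIV_isconst_all by blast
  have "(G \<longlongrightarrow> (1/4)*(1^2-1)^2 - (1/2)*0^2) at_top"
    unfolding G_def[abs_def] using lim_\<phi> match_\<phi>[unfolded dp] by (intro tendsto_intros) auto
  then have Gl: "(G \<longlongrightarrow> 0) at_top" by simp
  have G00: "G 0 = 0" using const_lim[OF Gl _ Gc] by simp
  then have dp0: "(Dp 1 0)^2 = 1/2" unfolding G_def \<phi>_0 by simp
  have pc: "continuous_on UNIV \<phi>" using p1 DERIV_isCont continuous_at_imp_continuous_on by blast
  define \<psi> where "\<psi> s = tanh (s / sqrt 2)" for s
  have psd: "\<And>x. (\<psi> has_real_derivative (1 - \<psi> x ^ 2) / sqrt 2) (at x)"
  proof -
    fix x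
    have "(\<psi> has_real_derivative (1 - tanh (x / sqrt 2) ^ 2) * (1 / sqrt 2)) (at x)"
    proof -
      have c: "cosh (x / sqrt 2) \<noteq> 0" using cosh_real_pos[of "x / sqrt 2"] by simp
      have b: "((\<lambda>s. s / sqrt 2) has_real_derivative 1 / sqrt 2) (at x)"
        using DERIV_cdivide[OF DERIV_ident, of "sqrt 2" x] by simp
      show ?thesis unfolding \<psi>_def[abs_def] using has_field_derivative_tanh[OF c b] .
    qed
    then show "(\<psi> has_real_derivative (1 - \<psi> x ^ 2) / sqrt 2) (at x)" unfolding \<psi>_def by simp
  qed
  have psc: "continuous_on UNIV \<psi>" using psd DERIV_isCont continuous_at_imp_continuous_on by blast
  have psi0: "\<psi> 0 = 0" unfolding \<psi>_def by simp
  have "Dp 1 0 = 1 / sqrt 2 \<or> Dp 1 0 = - (1 / sqrt 2)"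
  proof -
    have "(Dp 1 0)^2 = (1 / sqrt 2)^2" using dp0 by (simp add: power_divide)
    then show ?thesis using power2_eq_iff by blast
  qed
  then have phipsi: "\<And>x. \<phi> x = \<psi> x"
  proof
    assume h: "Dp 1 0 = 1 / sqrt 2"
    define v where "v s = Dp 1 s - (1 - \<phi> s ^ 2) / sqrt 2" for s
    have vd: "\<And>x. (v has_real_derivative (sqrt 2 * \<phi> x) * v x) (at x)"
    proof -
      fix x
      have "(v has_real_derivative Dp 2 x - (0 - 2 * \<phi> x * Dp 1 x) / sqrt 2) (at x)"
        unfolding v_def[abs_def] by (intro DERIV_diff DERIV_cdivide DERIV_sq p1 p2 DERIV_const)
      moreover have "Dp 2 x - (0 - 2 * \<phi> x * Dp 1 x) / sqrt 2 = (sqrt 2 * \<phi> x) * v x"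
        unfolding ode2 v_def using s2 by (simp add: field_simps power3_eq_cube power2_eq_square)
      ultimately show "(v has_real_derivative (sqrt 2 * \<phi> x) * v x) (at x)" by simp
    qed
    have v0: "\<And>x. v x = 0"
      by (rule lin_zero[OF vd]) (use pc h \<phi>_0 in \<open>auto intro!: continuous_intros simp: v_def\<close>)
    define z where "z s = \<phi> s - \<psi> s" for s
    have zd: "\<And>x. (z has_real_derivative (- (\<phi> x + \<psi> x) / sqrt 2) * z x) (at x)"
    proof -
      fix x
      have der: "(z has_real_derivative Dp 1 x - (1 - \<psi> x ^ 2) / sqrt 2) (at x)"
        unfolding z_def[abs_def] by (intro DERIV_diff p1 psd)
      have d1: "Dp 1 x = (1 - \<phi> x ^ 2) / sqrt 2" using v0[of x] unfolding v_def by simp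
      have e: "Dp 1 x - (1 - \<psi> x ^ 2) / sqrt 2 = (- (\<phi> x + \<psi> x) / sqrt 2) * z x"
        unfolding d1 z_def by (simp add: field_simps power2_eq_square)
      show "(z has_real_derivative (- (\<phi> x + \<psi> x) / sqrt 2) * z x) (at x)"
        using der unfolding e .
    qed
    have z0: "\<And>x. z x = 0"
      by (rule lin_zero[OF zd]) (use pc psc \<phi>_0 psi0 in \<open>auto intro!: continuous_intros simp: z_def\<close>)
    show "\<And>x. \<phi> x = \<psi> x" using z0 unfolding z_def by simp
  next
    assume h: "Dp 1 0 = - (1 / sqrt 2)"
    define v where "v s = Dp 1 s + (1 - \<phi> s ^ 2) / sqrt 2" for s
    have vd: "\<And>x. (v has_real_derivative (- sqrt 2 * \<phi> x) * v x) (at x)"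
    proof -
      fix x
      have "(v has_real_derivative Dp 2 x + (0 - 2 * \<phi> x * Dp 1 x) / sqrt 2) (at x)"
        unfolding v_def[abs_def] by (intro DERIV_add DERIV_cdivide DERIV_diff DERIV_sq p1 p2 DERIV_const)
      moreover have "Dp 2 x + (0 - 2 * \<phi> x * Dp 1 x) / sqrt 2 = (- sqrt 2 * \<phi> x) * v x"
        unfolding ode2 v_def using s2 by (simp add: field_simps power3_eq_cube power2_eq_square)
      ultimately show "(v has_real_derivative (- sqrt 2 * \<phi> x) * v x) (at x)" by simp
    qed
    have v0: "\<And>x. v x = 0"
      by (rule lin_zero[OF vd]) (use pc h \<phi>_0 in \<open>auto intro!: continuous_intros simp: v_def\<close>)
    define z where "z s = \<phi> s + \<psi> s" for s
    have zd: "\<And>x. (z has_real_derivative ((\<phi> x - \<psi> x) / sqrt 2) * z x) (at x)"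
    proof -
      fix x
      have der: "(z has_real_derivative Dp 1 x + (1 - \<psi> x ^ 2) / sqrt 2) (at x)"
        unfolding z_def[abs_def] by (intro DERIV_add p1 psd)
      have d1: "Dp 1 x = - (1 - \<phi> x ^ 2) / sqrt 2" using v0[of x] unfolding v_def by (simp add: field_simps)
      have e: "Dp 1 x + (1 - \<psi> x ^ 2) / sqrt 2 = ((\<phi> x - \<psi> x) / sqrt 2) * z x"
        unfolding d1 z_def by (simp add: field_simps power2_eq_square)
      show "(z has_real_derivative ((\<phi> x - \<psi> x) / sqrt 2) * z x) (at x)"
        using der unfolding e .
    qed
    have z0: "\<And>x. z x = 0"
      by (rule lin_zero[OF zd]) (use pc psc \<phi>_0 psi0 in \<open>auto intro!: continuous_intros simp: z_def\<close>)
    have "\<phi> = (\<lambda>x. - \<psi> x)" using z0 unfolding z_def by (auto simp: algebra_simps eq_neg_iff_add_eq_0)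
    moreover have "((\<lambda>x. - \<psi> x) \<longlongrightarrow> - 1) at_top"
    proof -
      have f: "filterlim (\<lambda>x. (1 / sqrt 2) * x) at_top (at_top :: real filter)"
        by (rule filterlim_tendsto_pos_mult_at_top[OF tendsto_const _ filterlim_ident]) simp
      have "(\<psi> \<longlongrightarrow> 1) at_top"
        unfolding \<psi>_def[abs_def] using filterlim_compose[OF tanh_real_at_top f] by (simp add: field_simps)
      then show ?thesis by (intro tendsto_intros)
    qed
    ultimately have "(\<phi> \<longlongrightarrow> - 1) at_top" by simp
    then have "(1::real) = -1" using tendsto_unique[OF _ lim_\<phi>] by (metis trivial_limit_at_top_linorder)
    then show "\<And>x. \<phi> x = \<psi> x" by simp
  qed

  have "\<exists>c. \<forall>x\<in>UNIV. u x = c"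
    by (rule has_derivative_zero_constant) (use u1 w0 in \<open>auto simp: has_vector_derivative_def\<close>)
  then have uc: "\<And>x. u x = u 0" by auto
  have upe: "up = u 0" using const_lim[OF lim_u(1) _ uc] by simp
  have ume: "um = u 0" using const_lim[OF lim_u(2) _ uc] by simp
  define c where "c = Vn - u 0 \<bullet> n"
  have K: "\<And>x. Dr 1 x * c = 0"
  proof -
    fix x
    have "- Dr 1 x * Vn + (Dr 1 x *\<^sub>R u 0 + \<rho> x *\<^sub>R Du 1 x) \<bullet> n = 0"
      using eq_mass[of x] unfolding dr dru by (metis uc)
    then show "Dr 1 x * c = 0" unfolding c_def w0 by (simp add: inner_add_left algebra_simps) (metis eq_commute)
  qed
  have part1: "\<And>x. \<rho> x * c = \<rho>p * c \<and> \<rho> x * c = \<rho>m * c"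
  proof (cases "c = 0")
    case False
    then have "\<And>x. Dr 1 x = 0" using K by simp
    then have rc: "\<And>x. \<rho> x = \<rho> 0" using r1 DERIV_isconst_all by metis
    have "\<rho> 0 = \<rho>p" using const_lim[OF lim_\<rho>(1) _ rc] by simp
    moreover have "\<rho> 0 = \<rho>m" using const_lim[OF lim_\<rho>(2) _ rc] by simp
    ultimately show "\<And>x. \<rho> x * c = \<rho>p * c \<and> \<rho> x * c = \<rho>m * c" using rc by metis
  qed simp
  have dpos: "\<And>x. Dp 1 x > 0"
  proof -
    fix x
    have "(\<phi> has_real_derivative (1 - \<psi> x ^ 2) / sqrt 2) (at x)"
      using psd[of x] phipsi by (metis ext)
    then have e: "Dp 1 x = (1 - \<psi> x ^ 2) / sqrt 2" using p1 DERIV_unique by blast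
    have "\<bar>\<psi> x\<bar> < 1" unfolding \<psi>_def using tanh_real_bounds by (simp add: abs_less_iff)
    then have "\<psi> x ^ 2 < 1" by (simp add: abs_square_less_1)
    then show "Dp 1 x > 0" unfolding e by simp
  qed
  have ch1: "chi = 1 \<Longrightarrow> c = 0"
  proof -
    assume "chi = 1"
    then have "\<rho> 0 * Dp 1 0 * c = 0" using eq_mu[of 0] mu0[of 0] uc unfolding dp c_def by simp
    then show "c = 0" using \<rho>_pos[of 0] dpos[of 0] by simp
  qed
  have A1: "\<forall>\<xi>. \<rho> \<xi> * (Vn - u \<xi> \<bullet> n) = \<rho>p * (Vn - up \<bullet> n)
              \<and> \<rho> \<xi> * (Vn - u \<xi> \<bullet> n) = \<rho>m * (Vn - um \<bullet> n)"
  proof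
    fix \<xi>
    show "\<rho> \<xi> * (Vn - u \<xi> \<bullet> n) = \<rho>p * (Vn - up \<bullet> n)
              \<and> \<rho> \<xi> * (Vn - u \<xi> \<bullet> n) = \<rho>m * (Vn - um \<bullet> n)"
      using part1[of \<xi>] uc[of \<xi>] upe ume unfolding c_def by simp
  qed
  have A2: "\<forall>\<xi>. \<phi> \<xi> = tanh (\<xi> / sqrt 2)" using phipsi unfolding \<psi>_def by simp
  have A3: "\<forall>\<xi>. vector_derivative u (at \<xi>) = 0" using du w0 by simp
  have A4: "\<forall>\<xi>. deriv \<theta> \<xi> = 0" using dt t1z by simp
  have A5: "chi = 1 \<longrightarrow> (\<forall>\<xi>. Vn - u \<xi> \<bullet> n = 0)"
  proof
    assume "chi = 1"
    then have "c = 0" by (rule ch1)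
    then show "\<forall>\<xi>. Vn - u \<xi> \<bullet> n = 0" using uc unfolding c_def by (metis diff_self)
  qed
  have A6: "\<forall>\<xi>. deriv \<rho> \<xi> * (Vn - u \<xi> \<bullet> n) = 0"
  proof
    fix \<xi>
    show "deriv \<rho> \<xi> * (Vn - u \<xi> \<bullet> n) = 0" using K[of \<xi>] uc[of \<xi>] unfolding dr c_def by simp
  qed
  show ?thesis using A1 A2 A3 A4 A5 A6 by blast
qed

theorem lemma2p2:
  fixes n :: "real ^ 'N" and Vn \<nu> lam kk chi :: real
    and \<rho> \<phi> \<mu> \<theta> :: "real \<Rightarrow> real" and u :: "real \<Rightarrow> real ^ 'N"
    and \<rho>p \<rho>m :: real and up um :: "real ^ 'N"
  assumes n_unit: "norm n = 1"
    and \<nu>_pos: "\<nu> > 0" and lam_pos: "lam > 0" and kk_pos: "kk > 0"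
    and chi_cases: "chi = 0 \<or> chi = 1"
    and smooth: "smooth_real \<rho>" "smooth_real u" "smooth_real \<phi>" "smooth_real \<mu>" "smooth_real \<theta>"
    and \<rho>_pos: "\<And>\<xi>. \<rho> \<xi> > 0"
    and eq_mass: "\<And>\<xi>. - deriv \<rho> \<xi> * Vn
        + vector_derivative (\<lambda>s. \<rho> s *\<^sub>R u s) (at \<xi>) \<bullet> n = 0"
    and eq_mom: "\<And>\<xi>.
        deriv (\<lambda>s. (\<nu> + lam) * (vector_derivative u (at s) \<bullet> n)) \<xi> *\<^sub>R n
        + vector_derivative (\<lambda>s. \<nu> *\<^sub>R vector_derivative u (at s)) (at \<xi>)
        + ((1/4) * deriv (\<lambda>s. (\<phi> s ^ 2 - 1) ^ 2) \<xi>) *\<^sub>R n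
        - ((1/2) * deriv (\<lambda>s. \<bar>deriv \<phi> s\<bar> ^ 2) \<xi>) *\<^sub>R n = 0"
    and eq_mu: "\<And>\<xi>. chi * \<rho> \<xi> * deriv \<phi> \<xi> * (Vn - u \<xi> \<bullet> n) = \<mu> \<xi>"
    and eq_chem: "\<And>\<xi>. \<rho> \<xi> * \<mu> \<xi> = - deriv (deriv \<phi>) \<xi> + \<phi> \<xi> ^ 3 - \<phi> \<xi>"
    and eq_energy: "\<And>\<xi>. kk * deriv (deriv \<theta>) \<xi>
        + \<nu> * (norm (vector_derivative u (at \<xi>))) ^ 2
        + (\<nu> + lam) * \<bar>vector_derivative u (at \<xi>) \<bullet> n\<bar> ^ 2
        + chi * \<mu> \<xi> ^ 2 = 0"
    and lim_\<rho>: "(\<rho> \<longlongrightarrow> \<rho>p) at_top" "(\<rho> \<longlongrightarrow> \<rho>m) at_bot" "\<rho>p > 0" "\<rho>m > 0"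
    and lim_u: "(u \<longlongrightarrow> up) at_top" "(u \<longlongrightarrow> um) at_bot"
    and lim_\<phi>: "(\<phi> \<longlongrightarrow> 1) at_top" "(\<phi> \<longlongrightarrow> -1) at_bot"
    and \<phi>_0: "\<phi> 0 = 0"
    and match_\<rho>: "((deriv \<rho>) \<longlongrightarrow> 0) at_top" "((deriv \<rho>) \<longlongrightarrow> 0) at_bot"
    and match_u: "((\<lambda>s. vector_derivative u (at s)) \<longlongrightarrow> 0) at_top"
                 "((\<lambda>s. vector_derivative u (at s)) \<longlongrightarrow> 0) at_bot"
    and match_\<phi>: "((deriv \<phi>) \<longlongrightarrow> 0) at_top" "((deriv \<phi>) \<longlongrightarrow> 0) at_bot"
    and match_\<theta>: "((deriv \<theta>) \<longlongrightarrow> 0) at_top" "((deriv \<theta>) \<longlongrightarrow> 0) at_bot"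
  shows "(\<forall>\<xi>. \<rho> \<xi> * (Vn - u \<xi> \<bullet> n) = \<rho>p * (Vn - up \<bullet> n)
              \<and> \<rho> \<xi> * (Vn - u \<xi> \<bullet> n) = \<rho>m * (Vn - um \<bullet> n))
       \<and> (\<forall>\<xi>. \<phi> \<xi> = tanh (\<xi> / sqrt 2))
       \<and> (\<forall>\<xi>. vector_derivative u (at \<xi>) = 0)
       \<and> (\<forall>\<xi>. deriv \<theta> \<xi> = 0)
       \<and> (chi = 1 \<longrightarrow> (\<forall>\<xi>. Vn - u \<xi> \<bullet> n = 0))
       \<and> (chi = 0 \<longrightarrow> (\<forall>\<xi>. deriv \<rho> \<xi> * (Vn - u \<xi> \<bullet> n) = 0))"
  by (rule X) (rule assms)+

end
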